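(* Let $\mathbf{a}$ be a CSCA and let $\xi\in\mathcal{P}^2$ be reflection invariant (both entries in $\mathcal{R}$) with $\gcd(\xi_+,\xi_-)=1$. For $t\in\mathbb{N}$ let $n(t,\xi)=\deg(\mathbf{a}^t\xi)$, so that the stabilizer generator $W(\mathbf{a}^t\xi)$ has length $2n(t,\xi)+1$. Then $$\lim_{t\to\infty}\frac{1}{t}n(t,\xi)=\deg(\mathrm{tr}\,\mathbf{a}).$$
   Context: $\mathcal{P}$ = Laurent polynomials in $u$ over $\mathbb{Z}_2$, $\mathcal{R}$ its subring of palindromes ($p(u^{-1})=p(u)$). A CSCA is a $2\times2$ matrix over $\mathcal{R}$ with determinant $1$. For a palindrome $p\in\mathcal{R}$, $\deg p$ is the highest exponent of $u$ occurring in $p$ (with $\deg p=0$ for constants, including $0$); for a vector of palindromes, $\deg$ is the maximum of the degrees of its entries. $W(\xi)$ denotes the tensor product of Pauli matrices labelled by $\xi$ (site $x$ carries $W(\xi_+(x),\xi_-(x))$ with $W(1,0)=\sigma_1$, $W(0,1)=\sigma_3$, $W(1,1)\propto\sigma_2$, $W(0,0)=\mathbb{1}$). *)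

theory Defs
  imports Complex_Main
begin

text \<open>A Laurent polynomial in u over Z_2 is represented by its (finite) support:
  the finite set of exponents n with coefficient 1.  Addition in Z_2 is symmetric
  difference; multiplication is convolution mod 2.\<close>

type_synonym lpoly = "int set"

definition lp_wf :: "lpoly \<Rightarrow> bool" where
  "lp_wf p \<longleftrightarrow> finite p"

definition lp_zero :: lpoly where "lp_zero = {}"
definition lp_one :: lpoly where "lp_one = {0}"

definition lp_add :: "lpoly \<Rightarrow> lpoly \<Rightarrow> lpoly" where
  "lp_add p q = (p - q) \<union> (q - p)"

definition lp_mult :: "lpoly \<Rightarrow> lpoly \<Rightarrow> lpoly" where
  "lp_mult p q = {n. odd (card {i \<in> p. n - i \<in> q})}"

text \<open>Palindromes: p(u^{-1}) = p(u).\<close>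
definition palindrome :: "lpoly \<Rightarrow> bool" where
  "palindrome p \<longleftrightarrow> finite p \<and> (\<forall>n. n \<in> p \<longleftrightarrow> - n \<in> p)"

text \<open>Degree: highest exponent (0 for constants and for 0).\<close>
definition pdeg :: "lpoly \<Rightarrow> nat" where
  "pdeg p = (if p = {} then 0 else nat (Max p))"

definition vdeg :: "lpoly \<times> lpoly \<Rightarrow> nat" where
  "vdeg v = max (pdeg (fst v)) (pdeg (snd v))"

definition lp_dvd :: "lpoly \<Rightarrow> lpoly \<Rightarrow> bool" where
  "lp_dvd d p \<longleftrightarrow> (\<exists>c. finite c \<and> lp_mult d c = p)"

definition lp_gcd_one :: "lpoly \<Rightarrow> lpoly \<Rightarrow> bool" where
  "lp_gcd_one p q \<longleftrightarrow>
     (\<forall>d. finite d \<and> lp_dvd d p \<and> lp_dvd d q \<longrightarrow> lp_dvd d lp_one)"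

text \<open>2x2 matrices ((a11,a12),(a21,a22)) over Laurent polynomials.\<close>
type_synonym lmat = "(lpoly \<times> lpoly) \<times> (lpoly \<times> lpoly)"

definition mat_apply :: "lmat \<Rightarrow> lpoly \<times> lpoly \<Rightarrow> lpoly \<times> lpoly" where
  "mat_apply a v =
     (lp_add (lp_mult (fst (fst a)) (fst v)) (lp_mult (snd (fst a)) (snd v)),
      lp_add (lp_mult (fst (snd a)) (fst v)) (lp_mult (snd (snd a)) (snd v)))"

definition mat_det :: "lmat \<Rightarrow> lpoly" where
  "mat_det a = lp_add (lp_mult (fst (fst a)) (snd (snd a)))
                      (lp_mult (snd (fst a)) (fst (snd a)))"

definition mat_tr :: "lmat \<Rightarrow> lpoly" where
  "mat_tr a = lp_add (fst (fst a)) (snd (snd a))"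

definition CSCA :: "lmat \<Rightarrow> bool" where
  "CSCA a \<longleftrightarrow> palindrome (fst (fst a)) \<and> palindrome (snd (fst a)) \<and>
              palindrome (fst (snd a)) \<and> palindrome (snd (snd a)) \<and>
              mat_det a = lp_one"

end

theory Submission imports Defs "HOL-Library.Poly_Mapping" "HOL-Library.Z2"
begin

type_synonym R = "int \<Rightarrow>\<^sub>0 bit"

definition L :: "lpoly \<Rightarrow> R" where "L p = Abs_poly_mapping (\<lambda>n. of_bool (n \<in> p))"

lemma lookup_L: "finite p \<Longrightarrow> Poly_Mapping.lookup (L p) n = of_bool (n \<in> p)"
proof -
  assume "finite p"
  then have "finite {n. (of_bool (n \<in> p)::bit) \<noteq> 0}" by simp
  then show ?thesis unfolding L_def by (simp add: lookup_Abs_poly_mapping)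
qed

lemma keys_L: "finite p \<Longrightarrow> Poly_Mapping.keys (L p) = p"
  using lookup_not_eq_zero_eq_in_keys[of "L p"] by (auto simp: lookup_L)

lemma L_inj: "finite p \<Longrightarrow> finite q \<Longrightarrow> L p = L q \<Longrightarrow> p = q"
  by (metis keys_L)

lemma of_nat_bit: "(of_nat k :: bit) = of_bool (odd k)"
  by (induction k) auto

lemma lp_add_finite: "finite p \<Longrightarrow> finite q \<Longrightarrow> finite (lp_add p q)"
  by (simp add: lp_add_def)

lemma L_add: "finite p \<Longrightarrow> finite q \<Longrightarrow> L (lp_add p q) = L p + L q"
  by (rule poly_mapping_eqI) (auto simp: lookup_add lookup_L lp_add_finite lp_add_def)

lemma lp_mult_sub: "lp_mult p q \<subseteq> (\<lambda>(i,j). i + j) ` (p \<times> q)"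
proof
  fix n assume "n \<in> lp_mult p q"
  then have o: "odd (card {i \<in> p. n - i \<in> q})" unfolding lp_mult_def by simp
  have "{i \<in> p. n - i \<in> q} \<noteq> {}"
  proof
    assume "{i \<in> p. n - i \<in> q} = {}"
    then have "card {i \<in> p. n - i \<in> q} = 0" by (simp only: card.empty)
    with o show False by simp
  qed
  then obtain i where "i \<in> p" "n - i \<in> q" by blast
  then show "n \<in> (\<lambda>(i,j). i + j) ` (p \<times> q)" by (auto intro!: image_eqI[where x="(i, n-i)"])
qed

lemma lp_mult_finite: "finite p \<Longrightarrow> finite q \<Longrightarrow> finite (lp_mult p q)"
  by (rule finite_subset[OF lp_mult_sub]) auto

lemma L_mult: "finite p \<Longrightarrow> finite q \<Longrightarrow> L (lp_mult p q) = L p * L q"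
proof (rule poly_mapping_eqI)
  fix n assume fp: "finite p" and fq: "finite q"
  have inner: "Sum_any (\<lambda>q'. Poly_Mapping.lookup (L q) q' when n = l + q') = Poly_Mapping.lookup (L q) (n - l)" for l :: int
  proof -
    have "(\<lambda>q'. Poly_Mapping.lookup (L q) q' when n = l + q') = (\<lambda>q'. Poly_Mapping.lookup (L q) q' when q' = n - l)"
      by (auto simp: when_def)
    then show ?thesis by (simp only: Sum_any_when_equal)
  qed
  have "Poly_Mapping.lookup (L p * L q) n = Sum_any (\<lambda>l. Poly_Mapping.lookup (L p) l * Poly_Mapping.lookup (L q) (n - l))"
    by (simp add: lookup_mult inner)
  also have "\<dots> = (\<Sum>l\<in>{i \<in> p. n - i \<in> q}. 1)"
    by (subst Sum_any.expand_superset[where A="{i \<in> p. n - i \<in> q}"]) (auto simp: fp lookup_L fq)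
  also have "\<dots> = of_bool (n \<in> lp_mult p q)"
    by (simp add: of_nat_bit lp_mult_def)
  finally show "Poly_Mapping.lookup (L (lp_mult p q)) n = Poly_Mapping.lookup (L p * L q) n"
    by (simp add: lookup_L lp_mult_finite fp fq)
qed

lemma L_one: "L lp_one = 1"
  by (rule poly_mapping_eqI) (auto simp: lookup_L lp_one_def lookup_one when_def)

lemma R_neg: "- (f::R) = f"
  by (rule poly_mapping_eqI) (simp add: lookup_uminus)


lemma R_double: "(f::R) + f = 0"
  by (metis R_neg right_minus)

definition vadd :: "lpoly \<times> lpoly \<Rightarrow> lpoly \<times> lpoly \<Rightarrow> lpoly \<times> lpoly" where
  "vadd u w = (lp_add (fst u) (fst w), lp_add (snd u) (snd w))"
definition smul :: "lpoly \<Rightarrow> lpoly \<times> lpoly \<Rightarrow> lpoly \<times> lpoly" where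
  "smul c w = (lp_mult c (fst w), lp_mult c (snd w))"
definition fin :: "lpoly \<times> lpoly \<Rightarrow> bool" where
  "fin v \<longleftrightarrow> finite (fst v) \<and> finite (snd v)"
definition pal :: "lpoly \<times> lpoly \<Rightarrow> bool" where
  "pal v \<longleftrightarrow> palindrome (fst v) \<and> palindrome (snd v)"

lemma CH:
  assumes "CSCA a" "fin v"
  shows "mat_apply a (mat_apply a v) = vadd (smul (mat_tr a) (mat_apply a v)) v"
proof -
  obtain \<alpha> \<beta> \<gamma> \<delta> where a: "a = ((\<alpha>,\<beta>),(\<gamma>,\<delta>))" by (metis prod.collapse)
  obtain x y where v: "v = (x,y)" by fastforce
  have f: "finite \<alpha>" "finite \<beta>" "finite \<gamma>" "finite \<delta>" "finite x" "finite y"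
    using assms unfolding a v CSCA_def palindrome_def fin_def by auto
  have det: "L \<alpha> * L \<delta> + L \<beta> * L \<gamma> = 1"
    using assms(1) unfolding a CSCA_def mat_det_def
    by (metis L_add L_mult L_one f(1-4) fst_conv snd_conv lp_mult_finite)
  have d2: "\<And>f::R. f + f = 0" by (rule R_double)
  have key: "A * (A * X + B * Y) + B * (C * X + D * Y) = (A + D) * (A * X + B * Y) + X"
    if "A * D + B * C = 1" for A B C D X Y :: R
  proof -
    have "(A + D) * (A * X + B * Y) + X = (A + D) * (A * X + B * Y) + (A * D + B * C) * X"
      using that by simp
    also have "\<dots> = A * (A * X + B * Y) + B * (C * X + D * Y) + ((A*D*X) + (A*D*X))"
      by (simp add: algebra_simps)
    finally show ?thesis using d2 by simp
  qed
  have key2: "C * (A * X + B * Y) + D * (C * X + D * Y) = (A + D) * (C * X + D * Y) + Y"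
    if "A * D + B * C = 1" for A B C D X Y :: R
  proof -
    have "(A + D) * (C * X + D * Y) + Y = (A + D) * (C * X + D * Y) + (A * D + B * C) * Y"
      using that by simp
    also have "\<dots> = C * (A * X + B * Y) + D * (C * X + D * Y) + ((A*D*Y) + (A*D*Y))"
      by (simp add: algebra_simps)
    finally show ?thesis using d2 by simp
  qed
  show ?thesis
    unfolding a v mat_apply_def vadd_def smul_def mat_tr_def
    apply (simp only: fst_conv snd_conv prod.inject)
    apply (intro conjI; rule L_inj)
    using f key[OF det] key2[OF det]
    by (simp_all add: L_add L_mult lp_add_finite lp_mult_finite)
qed


lemma le_pdeg: assumes "finite p" "x \<in> p" shows "x \<le> int (pdeg p)"
proof -
  have ne: "p \<noteq> {}" using assms(2) by blast
  have "x \<le> Max p" using Max_ge[OF assms] .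
  also have "Max p \<le> int (nat (Max p))" by simp
  finally show ?thesis using ne by (simp add: pdeg_def)
qed

lemma pdeg_le: "finite p \<Longrightarrow> \<forall>x\<in>p. x \<le> int k \<Longrightarrow> pdeg p \<le> k"
proof (cases "p = {}")
  case False
  assume "finite p" "\<forall>x\<in>p. x \<le> int k"
  then have "Max p \<le> int k" using False Max_in by blast
  then show ?thesis using False unfolding pdeg_def by simp
qed (simp add: pdeg_def)

lemma pal_Max: "palindrome p \<Longrightarrow> p \<noteq> {} \<Longrightarrow> 0 \<le> Max p"
proof -
  assume a: "palindrome p" "p \<noteq> {}"
  then have f: "finite p" "Max p \<in> p" by (auto simp: palindrome_def)
  then have "- Max p \<in> p" using a(1) by (simp add: palindrome_def)
  then have "- Max p \<le> Max p" using f Max_ge by blast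
  then show ?thesis by simp
qed

lemma pdeg_mem: assumes "palindrome p" "p \<noteq> {}" shows "int (pdeg p) \<in> p"
proof -
  have "0 \<le> Max p" using pal_Max[OF assms] .
  then have "int (pdeg p) = Max p" using assms(2) by (simp add: pdeg_def)
  moreover have "Max p \<in> p" using assms by (simp add: palindrome_def)
  ultimately show ?thesis by simp
qed

lemma pal_fin: "palindrome p \<Longrightarrow> finite p" by (simp add: palindrome_def)

lemma pal_add: "palindrome p \<Longrightarrow> palindrome q \<Longrightarrow> palindrome (lp_add p q)"
  unfolding palindrome_def lp_add_def by auto

lemma pal_mult: assumes "palindrome p" "palindrome q" shows "palindrome (lp_mult p q)"
proof -
  have P: "\<And>n. n \<in> p \<longleftrightarrow> - n \<in> p" and Q: "\<And>n. n \<in> q \<longleftrightarrow> - n \<in> q"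
    using assms unfolding palindrome_def by blast+
  have c: "card {i \<in> p. - n - i \<in> q} = card {i \<in> p. n - i \<in> q}" for n
  proof -
    have "{i \<in> p. - n - i \<in> q} = uminus ` {i \<in> p. n - i \<in> q}"
    proof (intro equalityI subsetI)
      fix i assume "i \<in> {i \<in> p. - n - i \<in> q}"
      then have "- i \<in> p" "n - (- i) \<in> q" using P Q[of "- n - i"] by (auto simp: add.commute)
      then show "i \<in> uminus ` {i \<in> p. n - i \<in> q}" by (intro image_eqI[where x="- i"]) auto
    next
      fix i assume "i \<in> uminus ` {i \<in> p. n - i \<in> q}"
      then obtain j where j: "i = - j" "j \<in> p" "n - j \<in> q" by blast
      then have "- j \<in> p" "- n - (- j) \<in> q" using P Q[of "n - j"] by (auto simp: add.commute)
      then show "i \<in> {i \<in> p. - n - i \<in> q}" using j(1) by simp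
    qed
    then show ?thesis by (simp add: card_image)
  qed
  have "lp_mult p q = {n. odd (card {i \<in> p. n - i \<in> q})}" by (simp add: lp_mult_def)
  then have "n \<in> lp_mult p q \<longleftrightarrow> - n \<in> lp_mult p q" for n
    using c[of n] c[of "- n"] by simp
  then show ?thesis unfolding palindrome_def
    using lp_mult_finite[OF pal_fin[OF assms(1)] pal_fin[OF assms(2)]] by blast
qed

lemma D1: assumes "finite p" "finite q" shows "pdeg (lp_add p q) \<le> max (pdeg p) (pdeg q)"
proof (rule pdeg_le)
  show "finite (lp_add p q)" using assms by (rule lp_add_finite)
  show "\<forall>x\<in>lp_add p q. x \<le> int (max (pdeg p) (pdeg q))"
  proof
    fix x assume "x \<in> lp_add p q"
    then have "x \<in> p \<or> x \<in> q" by (auto simp: lp_add_def)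
    then show "x \<le> int (max (pdeg p) (pdeg q))"
    proof
      assume "x \<in> p" then have "x \<le> int (pdeg p)" by (rule le_pdeg[OF assms(1)])
      then show ?thesis by linarith
    next
      assume "x \<in> q" then have "x \<le> int (pdeg q)" by (rule le_pdeg[OF assms(2)])
      then show ?thesis by linarith
    qed
  qed
qed

lemma D2: assumes "palindrome p" "palindrome q" "pdeg p > pdeg q"
  shows "pdeg (lp_add p q) = pdeg p"
proof -
  have "p \<noteq> {}" using assms(3) unfolding pdeg_def by auto
  then have m: "int (pdeg p) \<in> p" using pdeg_mem assms(1) by blast
  have "int (pdeg p) \<notin> q" using le_pdeg[OF pal_fin[OF assms(2)]] assms(3) by force
  with m have "int (pdeg p) \<in> lp_add p q" by (simp add: lp_add_def)
  then have "pdeg p \<le> pdeg (lp_add p q)"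
    using le_pdeg lp_add_finite pal_fin assms by (metis of_nat_le_iff)
  then show ?thesis using D1[OF pal_fin pal_fin, OF assms(1,2)] assms(3) by linarith
qed

lemma D3: assumes "finite p" "finite q" shows "pdeg (lp_mult p q) \<le> pdeg p + pdeg q"
proof (rule pdeg_le)
  show "finite (lp_mult p q)" using assms by (rule lp_mult_finite)
  show "\<forall>x\<in>lp_mult p q. x \<le> int (pdeg p + pdeg q)"
  proof
    fix x assume "x \<in> lp_mult p q"
    then have "x \<in> (\<lambda>(i,j). i + j) ` (p \<times> q)" using lp_mult_sub by blast
    then obtain i j where ij: "x = i + j" "i \<in> p" "j \<in> q" by auto
    have "i \<le> int (pdeg p)" by (rule le_pdeg[OF assms(1) ij(2)])
    moreover have "j \<le> int (pdeg q)" by (rule le_pdeg[OF assms(2) ij(3)])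
    ultimately show "x \<le> int (pdeg p + pdeg q)" using ij(1) by simp
  qed
qed

lemma D4: assumes "palindrome p" "palindrome q" "p \<noteq> {}" "q \<noteq> {}"
  shows "pdeg (lp_mult p q) = pdeg p + pdeg q"
proof -
  let ?P = "int (pdeg p)" and ?Q = "int (pdeg q)"
  have fp: "finite p" "finite q" using assms pal_fin by auto
  have "{i \<in> p. ?P + ?Q - i \<in> q} = {?P}"
    using pdeg_mem[OF assms(1,3)] pdeg_mem[OF assms(2,4)] le_pdeg[OF fp(1)] le_pdeg[OF fp(2)]
    by (auto; smt (verit))
  then have "?P + ?Q \<in> lp_mult p q" by (simp add: lp_mult_def)
  then have "pdeg p + pdeg q \<le> pdeg (lp_mult p q)"
    using le_pdeg[OF lp_mult_finite[OF fp]] by (metis of_nat_add of_nat_le_iff)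
  then show ?thesis using D3[OF fp] by linarith
qed

lemma vdeg_alt: "vdeg v = max (pdeg (fst v)) (pdeg (snd v))" by (simp add: vdeg_def)

lemma V1: assumes "fin u" "fin w" shows "vdeg (vadd u w) \<le> max (vdeg u) (vdeg w)"
proof -
  have a: "pdeg (fst (vadd u w)) \<le> max (pdeg (fst u)) (pdeg (fst w))"
    using assms unfolding fin_def vadd_def by (simp add: D1)
  have b: "pdeg (snd (vadd u w)) \<le> max (pdeg (snd u)) (pdeg (snd w))"
    using assms unfolding fin_def vadd_def by (simp add: D1)
  have c: "max (pdeg (fst u)) (pdeg (fst w)) \<le> max (vdeg u) (vdeg w)"
       "max (pdeg (snd u)) (pdeg (snd w)) \<le> max (vdeg u) (vdeg w)"
    unfolding vdeg_def by (simp_all add: max_def)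
  show ?thesis unfolding vdeg_def[of "vadd u w"]
    by (rule max.boundedI[OF order_trans[OF a c(1)] order_trans[OF b c(2)]])
qed

lemma V2: assumes "pal u" "pal w" "vdeg u > vdeg w"
  shows "vdeg (vadd u w) = vdeg u"
proof -
  have f: "fin u" "fin w" using assms unfolding pal_def fin_def by (auto simp: pal_fin)
  have le: "vdeg (vadd u w) \<le> vdeg u" using V1[OF f] assms(3) by simp
  have "pdeg (fst w) < vdeg u" "pdeg (snd w) < vdeg u" using assms(3) by (auto simp: vdeg_def)
  then have "pdeg (fst (vadd u w)) = vdeg u \<or> pdeg (snd (vadd u w)) = vdeg u"
    using D2 assms(1,2) unfolding pal_def vadd_def vdeg_def
    by (cases "pdeg (fst u) \<le> pdeg (snd u)") (auto simp: max_def)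
  then show ?thesis using le by (auto simp: vdeg_def)
qed

lemma V3: assumes "finite c" "fin w" shows "vdeg (smul c w) \<le> pdeg c + vdeg w"
proof -
  have a: "pdeg (fst (smul c w)) \<le> pdeg c + pdeg (fst w)"
    using assms unfolding fin_def smul_def by (simp add: D3)
  have b: "pdeg (snd (smul c w)) \<le> pdeg c + pdeg (snd w)"
    using assms unfolding fin_def smul_def by (simp add: D3)
  have "pdeg (fst w) \<le> vdeg w" "pdeg (snd w) \<le> vdeg w" unfolding vdeg_def by simp_all
  with a b show ?thesis unfolding vdeg_def[of "smul c w"] by simp
qed

lemma lp_mult_empty[simp]: "lp_mult p {} = {}" "lp_mult {} p = {}"
  by (auto simp: lp_mult_def)

lemma pdeg_empty[simp]: "pdeg {} = 0" by (simp add: pdeg_def)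

lemma V4: assumes "palindrome c" "c \<noteq> {}" "pal w" "w \<noteq> ({},{})"
  shows "vdeg (smul c w) = pdeg c + vdeg w"
proof -
  have f: "finite c" "fin w" using assms unfolding pal_def fin_def by (auto simp: pal_fin)
  have "pdeg c + vdeg w \<le> vdeg (smul c w)"
  proof (cases "fst w = {}")
    case True
    then have "snd w \<noteq> {}" using assms(4) by (metis prod.collapse)
    then show ?thesis using True D4[OF assms(1) _ assms(2)] assms(3)
      unfolding pal_def vdeg_def smul_def by simp
  next
    case F: False
    show ?thesis
    proof (cases "snd w = {}")
      case True
      then show ?thesis using F D4[OF assms(1) _ assms(2)] assms(3)
        unfolding pal_def vdeg_def smul_def by simp
    next
      case False
      then show ?thesis using F D4[OF assms(1) _ assms(2)] assms(3)
        unfolding pal_def vdeg_def smul_def by (simp add: max_def)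
    qed
  qed
  then show ?thesis using V3[OF f] by linarith
qed


lemma mat_fin: "CSCA a \<Longrightarrow> fin v \<Longrightarrow> fin (mat_apply a v)"
  unfolding CSCA_def fin_def mat_apply_def
  by (simp add: lp_add_finite lp_mult_finite pal_fin)

lemma mat_pal: "CSCA a \<Longrightarrow> pal v \<Longrightarrow> pal (mat_apply a v)"
  unfolding CSCA_def pal_def mat_apply_def
  by (simp add: pal_add pal_mult)

lemma pal_smul: "palindrome c \<Longrightarrow> pal w \<Longrightarrow> pal (smul c w)"
  by (simp add: pal_def smul_def pal_mult)

lemma pal_vadd: "pal u \<Longrightarrow> pal w \<Longrightarrow> pal (vadd u w)"
  by (simp add: pal_def vadd_def pal_add)

lemma vadd_inv: "vadd (vadd u w) u = w"
  unfolding vadd_def lp_add_def by (cases u, cases w) auto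

lemma vadd_comm: "vadd u w = vadd w u"
  unfolding vadd_def lp_add_def by auto

lemma vadd_zero: "vadd ({},{}) w = w"
  unfolding vadd_def lp_add_def by auto

lemma smul_zero: "smul c ({},{}) = ({},{})"
  unfolding smul_def by simp

lemma mat_zero: "mat_apply a ({},{}) = ({},{})"
  unfolding mat_apply_def lp_add_def by simp

theorem mainTheorem16:
  fixes a :: lmat and xi :: "lpoly \<times> lpoly"
  assumes "CSCA a"
    and "palindrome (fst xi)" and "palindrome (snd xi)"
    and "lp_gcd_one (fst xi) (snd xi)"
  shows "(\<lambda>t::nat. real (vdeg ((mat_apply a ^^ t) xi)) / real t)
           \<longlonglongrightarrow> real (pdeg (mat_tr a))"
proof -
  define v where "v t = (mat_apply a ^^ t) xi" for t
  define \<tau> where "\<tau> = mat_tr a"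
  define m where "m = pdeg \<tau>"
  define e where "e t = vdeg (v t)" for t
  have vS: "v (Suc t) = mat_apply a (v t)" for t by (simp add: v_def)
  have palt: "palindrome \<tau>" using assms(1) unfolding \<tau>_def CSCA_def mat_tr_def by (simp add: pal_add)
  have pv: "pal (v t)" for t
    by (induction t) (auto simp: v_def pal_def assms mat_pal[OF assms(1), unfolded pal_def])
  have fv: "fin (v t)" for t using pv[of t] by (simp add: pal_def fin_def pal_fin)
  have rec: "v (Suc (Suc t)) = vadd (smul \<tau> (v (Suc t))) (v t)" for t
    using CH[OF assms(1) fv[of t]] by (simp add: vS \<tau>_def)
  have bk: "v t = vadd (smul \<tau> (v (Suc t))) (v (Suc (Suc t)))" for t
    using rec[of t] vadd_inv vadd_comm by metis
  have xinz: "xi \<noteq> ({},{})"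
  proof
    assume "xi = ({},{})"
    then have e: "fst xi = {}" "snd xi = {}" by simp_all
    have d0: "lp_dvd {} {}" unfolding lp_dvd_def by (intro exI[of _ "{}"]) simp
    have "lp_dvd {} lp_one" using assms(4) unfolding lp_gcd_one_def e using d0 by blast
    then show False unfolding lp_dvd_def lp_one_def by simp
  qed
  have step0: "v (Suc t) = ({},{}) \<Longrightarrow> v t = ({},{})" for t
  proof -
    assume h: "v (Suc t) = ({},{})"
    then have h2: "v (Suc (Suc t)) = ({},{})" by (simp only: vS mat_zero)
    show "v t = ({},{})" by (simp only: bk[of t] h h2 smul_zero vadd_zero)
  qed
  have nz: "v t \<noteq> ({},{})" for t
  proof (induction t)
    case 0 then show ?case using xinz by (simp add: v_def)
  next
    case (Suc t) then show ?case using step0 by blast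
  qed
  define C where "C = max (e 0) (e 1)"
  have up: "e t \<le> t * m + C \<and> e (Suc t) \<le> Suc t * m + C" for t
  proof (induction t)
    case 0 then show ?case by (simp add: C_def)
  next
    case (Suc t)
    have "e (Suc (Suc t)) \<le> max (vdeg (smul \<tau> (v (Suc t)))) (e t)"
      unfolding e_def rec by (rule V1) (use fv pv palt pal_smul in \<open>auto simp: pal_def fin_def pal_fin\<close>)
    also have "\<dots> \<le> max (m + e (Suc t)) (e t)"
      using V3[OF pal_fin[OF palt] fv[of "Suc t"]] unfolding e_def m_def by (intro max.mono) simp_all
    also have "\<dots> \<le> Suc (Suc t) * m + C" using Suc by auto
    finally show ?case using Suc by simp
  qed
  have lim: "(\<lambda>t. real (e t) / real t) \<longlonglongrightarrow> real m"
  proof (cases "m = 0")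
    case True
    have "(\<lambda>t. real (e t) / real t) \<longlonglongrightarrow> 0"
    proof (rule tendsto_sandwich[where f="\<lambda>_. 0" and h="\<lambda>t. real C / real t"])
      show "\<forall>\<^sub>F n in sequentially. 0 \<le> real (e n) / real n" by simp
      show "\<forall>\<^sub>F n in sequentially. real (e n) / real n \<le> real C / real n"
        using up True by (auto intro!: always_eventually divide_right_mono)
    qed (auto intro: lim_const_over_n)
    then show ?thesis using True by simp
  next
    case False
    then have m1: "m \<ge> 1" by simp
    then have tnz: "\<tau> \<noteq> {}" by (auto simp: m_def)
    have smdeg: "vdeg (smul \<tau> (v t)) = m + e t" for t
      using V4[OF palt tnz pv nz] by (simp add: m_def e_def)
    have grow: "e t < e (Suc t) \<Longrightarrow> e (Suc (Suc t)) = m + e (Suc t)" for t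
      using V2[OF pal_smul[OF palt pv[of "Suc t"]] pv[of t]] smdeg[of "Suc t"]
      by (simp add: e_def rec)
    have "\<exists>T. e T < e (Suc T)"
    proof (rule ccontr)
      assume "\<not> ?thesis"
      then have nd: "e (Suc t) \<le> e t" for t by (simp add: not_less)
      have dec: "e t = m + e (Suc t)" for t
        using V2[OF pal_smul[OF palt pv[of "Suc t"]] pv[of "Suc (Suc t)"]] smdeg[of "Suc t"] nd[of "Suc t"] m1
        by (simp add: e_def bk[of t, symmetric])
      have E: "e 0 = t * m + e t" for t
      proof (induction t)
        case 0 then show ?case by simp
      next
        case (Suc t)
        have "e t = m + e (Suc t)" by (rule dec)
        with Suc.IH show ?case by simp
      qed
      have "Suc (e 0) \<le> Suc (e 0) * m" using mult_le_mono2[OF m1, of "Suc (e 0)"] by (simp only: mult_1_right)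
      with E[of "Suc (e 0)"] show False by linarith
    qed
    then obtain T where T: "e T < e (Suc T)" by blast
    have lin: "e (Suc T + k) = e (Suc T) + k * m \<and> e (T + k) < e (Suc T + k)" for k
    proof (induction k)
      case 0 then show ?case using T by simp
    next
      case (Suc k)
      then have h1: "e (Suc T + k) = e (Suc T) + k * m" and h2: "e (T + k) < e (Suc (T + k))" by simp_all
      have g: "e (Suc (Suc (T + k))) = m + e (Suc (T + k))" using grow[OF h2] .
      have "e (Suc T + Suc k) = e (Suc T) + Suc k * m" using g h1 by simp
      moreover have "e (T + Suc k) < e (Suc T + Suc k)" using g m1 by simp
      ultimately show ?case by blast
    qed
    define c where "c = real (e (Suc T)) - real (Suc T) * real m"
    have ev: "\<forall>\<^sub>F t in sequentially. real m + c / real t = real (e t) / real t"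
    proof (rule eventually_sequentiallyI[where c="Suc T"])
      fix t assume "Suc T \<le> t"
      then obtain k where k: "t = Suc T + k" by (metis le_add_diff_inverse)
      have "real (e t) = real (e (Suc T)) + real k * real m" using lin[of k] k by simp
      also have "\<dots> = real m * real t + c" using k by (simp add: c_def algebra_simps)
      finally show "real m + c / real t = real (e t) / real t" using k by (simp add: field_simps)
    qed
    have "(\<lambda>t. real m + c / real t) \<longlonglongrightarrow> real m + 0"
      by (intro tendsto_intros)
    then show ?thesis using Lim_transform_eventually[OF _ ev] by simp
  qed
  then show ?thesis by (simp add: e_def v_def m_def \<tau>_def)
qed

end
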